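(* Let $k\ge1$, $n_1,\dots,n_k\ge2$, $n=n_1+\cdots+n_k$, and $C\in\mathbb{S}^{n+1}$. Consider (Spheres-BM): minimize $\langle CY,Y\rangle$ over $Y\in\mathbb{R}^{(n+1)\times p}$ with $Y^\top=(Y_1^\top\ \cdots\ Y_k^\top\ y)$, $Y_i\in\mathbb{R}^{n_i\times p}$, $y\in\mathbb{R}^p$, subject to $\|Y_1\|=\cdots=\|Y_k\|=1$ and $\|y\|=1$; and (Spheres-SDP): minimize $\langle C,X\rangle$ over $X\in\mathbb{S}^{n+1}$ subject to $\operatorname{tr}(X_{11})=\cdots=\operatorname{tr}(X_{kk})=1$, $X_{n+1,n+1}=1$, $X\succeq0$. If $p\ge\max(2,k)$, then every second-order critical point $Y$ of (Spheres-BM) is globally optimal for (Spheres-BM), and $YY^\top$ is globally optimal for (Spheres-SDP).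
   Context: $\langle U,V\rangle=\operatorname{tr}(U^\top V)$, $\|\cdot\|$ Frobenius/Euclidean norm; $\mathbb{S}^{N}$ the real symmetric $N\times N$ matrices. $X_{ii}$ denotes the $n_i\times n_i$ diagonal block of $X$ corresponding to the $i$-th group of coordinates (the first $n$ coordinates are split consecutively into groups of sizes $n_1,\dots,n_k$), and $X_{n+1,n+1}$ its last diagonal entry. Both problems are instances of the general form with constraint matrices $A_i$ ($i=1,\dots,k$) equal to the block-diagonal matrix with $I_{n_i}$ in the $i$-th block and zeros elsewhere, $A_{k+1}=e_{n+1}e_{n+1}^\top$, and all right-hand sides equal to $1$; write $\mathcal{A}(X)_i=\langle A_i,X\rangle$, $\mathcal{A}^*(\nu)=\sum_i\nu_iA_i$. For feasible $Y$: $T_Y=\{\dot Y:\langle A_iY,\dot Y\rangle=0\ \forall i\}$; $G_{ij}=\langle A_iY,A_jY\rangle$; $\mu=G^\dagger\mathcal{A}(CYY^\top)$; $S(Y)=C-\mathcal{A}^*(\mu)$. $Y$ is second-order critical if $S(Y)Y=0$ and $\langle\dot Y,S(Y)\dot Y\rangle\ge0$ for all $\dot Y\in T_Y$. *)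

theory Defs
  imports "Jordan_Normal_Form.Matrix"
begin

(* The groups of coordinates are
   given by a list ns = [n_1,...,n_k]; coordinates are 0-indexed, group i
   (i < k) occupies rows goff ns i ..< goff ns i + ns!i, and the last
   coordinate (the paper's n+1) is row n = sum_list ns. *)

definition mtrace :: "real mat \<Rightarrow> real" where
  "mtrace X = (\<Sum>i<dim_row X. X $$ (i,i))"

definition frob_inner :: "real mat \<Rightarrow> real mat \<Rightarrow> real" where
  "frob_inner U V = mtrace (transpose_mat U * V)"

definition frob_norm :: "real mat \<Rightarrow> real" where
  "frob_norm U = sqrt (frob_inner U U)"

definition goff :: "nat list \<Rightarrow> nat \<Rightarrow> nat" where
  "goff ns i = sum_list (take i ns)"

definition blk :: "nat list \<Rightarrow> nat \<Rightarrow> real mat \<Rightarrow> real mat" where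
  "blk ns i Y = mat (ns ! i) (dim_col Y) (\<lambda>(a,j). Y $$ (goff ns i + a, j))"

definition lastrow :: "nat list \<Rightarrow> real mat \<Rightarrow> real mat" where
  "lastrow ns Y = mat 1 (dim_col Y) (\<lambda>(a,j). Y $$ (sum_list ns, j))"

definition dblk :: "nat list \<Rightarrow> nat \<Rightarrow> real mat \<Rightarrow> real mat" where
  "dblk ns i X = mat (ns ! i) (ns ! i) (\<lambda>(a,b). X $$ (goff ns i + a, goff ns i + b))"

(* constraint matrices A_0,...,A_k (paper: A_1..A_{k+1}), size (n+1)x(n+1) *)
definition Acon :: "nat list \<Rightarrow> nat \<Rightarrow> real mat" where
  "Acon ns i = mat (sum_list ns + 1) (sum_list ns + 1) (\<lambda>(a,b).
     if a = b \<and> (if i < length ns then goff ns i \<le> a \<and> a < goff ns i + ns ! i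
                  else a = sum_list ns) then 1 else 0)"

definition Aop :: "nat list \<Rightarrow> real mat \<Rightarrow> real vec" where
  "Aop ns X = vec (length ns + 1) (\<lambda>i. frob_inner (Acon ns i) X)"

definition Aadj :: "nat list \<Rightarrow> real vec \<Rightarrow> real mat" where
  "Aadj ns \<nu> = mat (sum_list ns + 1) (sum_list ns + 1)
     (\<lambda>(a,b). \<Sum>i<length ns + 1. \<nu> $ i * Acon ns i $$ (a,b))"

definition pinv :: "real mat \<Rightarrow> real mat" where
  "pinv G = (THE H. H \<in> carrier_mat (dim_col G) (dim_row G) \<and>
      G * H * G = G \<and> H * G * H = H \<and>
      transpose_mat (G * H) = G * H \<and> transpose_mat (H * G) = H * G)"

definition Gram :: "nat list \<Rightarrow> real mat \<Rightarrow> real mat" where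
  "Gram ns Y = mat (length ns + 1) (length ns + 1)
     (\<lambda>(i,j). frob_inner (Acon ns i * Y) (Acon ns j * Y))"

definition mult :: "nat list \<Rightarrow> real mat \<Rightarrow> real mat \<Rightarrow> real vec" where
  "mult ns C Y = pinv (Gram ns Y) *\<^sub>v Aop ns (C * Y * transpose_mat Y)"

definition Smat :: "nat list \<Rightarrow> real mat \<Rightarrow> real mat \<Rightarrow> real mat" where
  "Smat ns C Y = C - Aadj ns (mult ns C Y)"

definition tangent :: "nat list \<Rightarrow> real mat \<Rightarrow> real mat set" where
  "tangent ns Y = {Yd \<in> carrier_mat (sum_list ns + 1) (dim_col Y).
      \<forall>i<length ns + 1. frob_inner (Acon ns i * Y) Yd = 0}"

definition bm_feasible :: "nat list \<Rightarrow> nat \<Rightarrow> real mat \<Rightarrow> bool" where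
  "bm_feasible ns p Y \<longleftrightarrow> Y \<in> carrier_mat (sum_list ns + 1) p \<and>
     (\<forall>i<length ns. frob_norm (blk ns i Y) = 1) \<and> frob_norm (lastrow ns Y) = 1"

definition bm_cost :: "real mat \<Rightarrow> real mat \<Rightarrow> real" where
  "bm_cost C Y = frob_inner (C * Y) Y"

definition sdp_cost :: "real mat \<Rightarrow> real mat \<Rightarrow> real" where
  "sdp_cost C X = frob_inner C X"

definition psd :: "real mat \<Rightarrow> bool" where
  "psd X \<longleftrightarrow> (\<forall>v \<in> carrier_vec (dim_row X). 0 \<le> v \<bullet> (X *\<^sub>v v))"

definition sdp_feasible :: "nat list \<Rightarrow> real mat \<Rightarrow> bool" where
  "sdp_feasible ns X \<longleftrightarrow> X \<in> carrier_mat (sum_list ns + 1) (sum_list ns + 1) \<and>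
     transpose_mat X = X \<and>
     (\<forall>i<length ns. mtrace (dblk ns i X) = 1) \<and>
     X $$ (sum_list ns, sum_list ns) = 1 \<and> psd X"

definition second_order_critical :: "nat list \<Rightarrow> nat \<Rightarrow> real mat \<Rightarrow> real mat \<Rightarrow> bool" where
  "second_order_critical ns p C Y \<longleftrightarrow> bm_feasible ns p Y \<and>
     Smat ns C Y * Y = 0\<^sub>m (sum_list ns + 1) p \<and>
     (\<forall>Yd \<in> tangent ns Y. 0 \<le> frob_inner Yd (Smat ns C Y * Yd))"

end

theory Submission
  imports Defs "Jordan_Normal_Form.Determinant"
begin


lemma lin_sys:
  fixes c :: "nat \<Rightarrow> nat \<Rightarrow> real"
  assumes "m < q"
  shows "\<exists>x. (\<exists>j<q. x j \<noteq> 0) \<and> (\<forall>i<m. (\<Sum>j<q. c i j * x j) = 0)"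
proof -
  define A where "A = mat q q (\<lambda>(i,j). if i < m then c i j else (0::real))"
  have Ac: "A \<in> carrier_mat q q" by (simp add: A_def)
  have eq: "A = mat\<^sub>r q q (\<lambda>i. if i = q - 1 then 0\<^sub>v q else row A i)"
  proof (rule eq_matI)
    fix i j assume ij: "i < dim_row (mat\<^sub>r q q (\<lambda>i. if i = q - 1 then 0\<^sub>v q else row A i))"
      "j < dim_col (mat\<^sub>r q q (\<lambda>i. if i = q - 1 then 0\<^sub>v q else row A i))"
    hence "i < q" "j < q" by auto
    thus "A $$ (i, j) = mat\<^sub>r q q (\<lambda>i. if i = q - 1 then 0\<^sub>v q else row A i) $$ (i, j)"
      using assms by (cases "i = q - 1") (simp_all add: A_def)
  qed (auto simp: A_def)
  have rc: "(\<lambda>i. row A i) \<in> {0..<q} \<rightarrow> carrier_vec q" using Ac by auto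
  have "det A = 0"
    using det_row_0[of "q - 1" q "\<lambda>i. row A i", OF _ rc] assms eq by simp
  then obtain v where v: "v \<in> carrier_vec q" "v \<noteq> 0\<^sub>v q" "A *\<^sub>v v = 0\<^sub>v q"
    using det_0_iff_vec_prod_zero[OF Ac] by auto
  have "\<exists>j<q. v $ j \<noteq> 0"
  proof (rule ccontr)
    assume "\<not> ?thesis"
    hence "v = 0\<^sub>v q" using v(1) by (intro eq_vecI) auto
    thus False using v(2) by simp
  qed
  moreover have "\<forall>i<m. (\<Sum>j<q. c i j * v $ j) = 0"
  proof (intro allI impI)
    fix i assume i: "i < m"
    have "(A *\<^sub>v v) $ i = 0" using v(3) i assms by simp
    moreover have "(A *\<^sub>v v) $ i = (\<Sum>j<q. c i j * v $ j)"
      using i assms v(1) by (simp add: A_def scalar_prod_def lessThan_atLeast0)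
    ultimately show "(\<Sum>j<q. c i j * v $ j) = 0" by simp
  qed
  ultimately show ?thesis by blast
qed

definition qf :: "nat \<Rightarrow> (nat \<Rightarrow> nat \<Rightarrow> real) \<Rightarrow> (nat \<Rightarrow> real) \<Rightarrow> real" where
  "qf n s f = (\<Sum>a<n. f a * (\<Sum>b<n. s a b * f b))"

definition bf :: "nat \<Rightarrow> (nat \<Rightarrow> nat \<Rightarrow> real) \<Rightarrow> (nat \<Rightarrow> real) \<Rightarrow> (nat \<Rightarrow> real) \<Rightarrow> real" where
  "bf n s f g = (\<Sum>a<n. f a * (\<Sum>b<n. s a b * g b))"

lemma qf_expand: "qf n x (\<lambda>t. c * g t + h t) = c^2 * qf n x g + c * bf n x g h + c * bf n x h g + qf n x h"
  by (simp add: qf_def bf_def algebra_simps sum.distrib sum_distrib_left power2_eq_square)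

lemma mult_if_delta: "(if P then (1::real) else 0) * v = (if P then v else 0)" by simp
lemma mult_if_delta2: "v * (if P then (1::real) else 0) = (if P then v else 0)" by simp

definition ee :: "nat \<Rightarrow> nat \<Rightarrow> real" where "ee a t = (if t = a then 1 else 0)"

lemma bf_ee: "a < n \<Longrightarrow> b < n \<Longrightarrow> bf n x (ee a) (ee b) = x a b"
  by (simp add: bf_def ee_def mult_if_delta mult_if_delta2)

lemma qf_ee: "a < n \<Longrightarrow> qf n x (ee a) = x a a"
  by (simp add: qf_def ee_def mult_if_delta mult_if_delta2)

lemma psd_diag: assumes "\<forall>f. qf n x f \<ge> 0" "a < n" shows "x a a \<ge> 0"
  using assms(1)[rule_format, of "ee a"] qf_ee[OF assms(2)] by simp

lemma psd_zero:
  assumes psd: "\<forall>f. qf n x f \<ge> 0" and sym: "\<forall>a<n. \<forall>b<n. x a b = x b a"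
    and a: "a < n" and b: "b < n" and z: "x a a = 0"
  shows "x a b = 0"
proof (rule ccontr)
  assume nz: "x a b \<noteq> 0"
  hence ab: "a \<noteq> b" using z by auto
  define c where "c = - (x b b + 1) / (2 * x a b)"
  have "qf n x (\<lambda>t. c * ee a t + ee b t) = c^2 * x a a + c * x a b + c * x b a + x b b"
    using qf_expand bf_ee qf_ee a b by simp
  also have "\<dots> = 2 * c * x a b + x b b" using z sym a b by simp
  also have "\<dots> = -1" using nz by (simp add: c_def field_simps)
  finally have "qf n x (\<lambda>t. c * ee a t + ee b t) = -1" .
  moreover have "qf n x (\<lambda>t. c * ee a t + ee b t) \<ge> 0" using psd by blast
  ultimately show False by simp
qed


lemma psd_trace_aux:
  fixes s :: "nat \<Rightarrow> nat \<Rightarrow> real"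
  assumes S: "\<forall>f. qf n s f \<ge> 0"
  shows "\<forall>x. (\<forall>a<n. \<forall>b<n. x a b = x b a) \<longrightarrow> (\<forall>f. qf n x f \<ge> 0) \<longrightarrow>
     card {a. a<n \<and> x a a \<noteq> 0} = c \<longrightarrow> (\<Sum>a<n. \<Sum>b<n. s a b * x a b) \<ge> 0"
proof (induction c rule: less_induct)
  case (less c)
  show ?case
  proof (intro allI impI)
    fix x :: "nat \<Rightarrow> nat \<Rightarrow> real"
    assume sym: "\<forall>a<n. \<forall>b<n. x a b = x b a" and px: "\<forall>f. qf n x f \<ge> 0"
      and cc: "card {a. a<n \<and> x a a \<noteq> 0} = c"
    show "(\<Sum>a<n. \<Sum>b<n. s a b * x a b) \<ge> 0"
    proof (cases "\<exists>a0<n. x a0 a0 \<noteq> 0")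
      case False
      then have "\<forall>a<n. \<forall>b<n. x a b = 0" using psd_zero[OF px sym] by blast
      thus ?thesis by simp
    next
      case True
      then obtain a0 where a0: "a0<n" "x a0 a0 \<noteq> 0" by blast
      define d where "d = x a0 a0"
      have dpos: "d > 0" using psd_diag[OF px a0(1)] a0(2) d_def by simp
      define x' where "x' = (\<lambda>a b. x a b - x a a0 * x b a0 / d)"
      have sym': "\<forall>a<n. \<forall>b<n. x' a b = x' b a" using sym by (simp add: x'_def mult.commute)
      have px': "\<forall>f. qf n x' f \<ge> 0"
      proof
        fix f
        define t where "t = (\<Sum>a<n. f a * x a a0)"
        have t2: "(\<Sum>b<n. x b a0 * f b) = t" unfolding t_def by (simp add: mult.commute)
        have inner: "\<And>a. (\<Sum>b<n. x' a b * f b) = (\<Sum>b<n. x a b * f b) - x a a0 / d * t"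
        proof -
          fix a
          have "(\<Sum>b<n. x' a b * f b) = (\<Sum>b<n. x a b * f b - x a a0 / d * (x b a0 * f b))"
            by (simp add: x'_def algebra_simps)
          also have "\<dots> = (\<Sum>b<n. x a b * f b) - (\<Sum>b<n. x a a0 / d * (x b a0 * f b))"
            by (rule sum_subtractf)
          also have "(\<Sum>b<n. x a a0 / d * (x b a0 * f b)) = x a a0 / d * t"
            unfolding sum_distrib_left[symmetric] t2 ..
          finally show "(\<Sum>b<n. x' a b * f b) = (\<Sum>b<n. x a b * f b) - x a a0 / d * t" .
        qed
        have e1: "qf n x' f = qf n x f - t^2/d"
        proof -
          have "qf n x' f = (\<Sum>a<n. f a * (\<Sum>b<n. x a b * f b) - (f a * x a a0) * (t / d))"
            unfolding qf_def inner by (simp add: algebra_simps)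
          also have "\<dots> = qf n x f - (\<Sum>a<n. (f a * x a a0) * (t / d))"
            unfolding qf_def by (rule sum_subtractf)
          also have "(\<Sum>a<n. (f a * x a a0) * (t / d)) = t * (t / d)"
            unfolding sum_distrib_right[symmetric] t_def ..
          finally show ?thesis by (simp add: power2_eq_square)
        qed
        have t3: "(\<Sum>b<n. x a0 b * f b) = (\<Sum>b<n. x b a0 * f b)"
          using sym a0(1) by (intro sum.cong) auto
        have b1: "bf n x (ee a0) f = t"
          using a0(1) t2 t3 by (simp add: bf_def ee_def mult_if_delta)
        have b2: "bf n x f (ee a0) = t"
          using a0(1) by (simp add: bf_def ee_def mult_if_delta2 t_def)
        have "qf n x (\<lambda>i. (-t/d) * ee a0 i + f i) = (-t/d)^2 * d + (-t/d) * t + (-t/d) * t + qf n x f"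
          using qf_expand[of n x "-t/d" "ee a0" f] b1 b2 qf_ee[OF a0(1)] d_def by simp
        also have "\<dots> = qf n x f - t^2/d" using dpos by (simp add: field_simps power2_eq_square)
        finally have "qf n x' f = qf n x (\<lambda>i. (-t/d) * ee a0 i + f i)" using e1 by simp
        thus "qf n x' f \<ge> 0" using px by simp
      qed
      have tr: "(\<Sum>a<n. \<Sum>b<n. s a b * x a b) = (\<Sum>a<n. \<Sum>b<n. s a b * x' a b) + qf n s (\<lambda>a. x a a0) / d"
      proof -
        have "(\<Sum>a<n. \<Sum>b<n. s a b * x a b) = (\<Sum>a<n. \<Sum>b<n. s a b * x' a b + x a a0 * (s a b * x b a0) / d)"
          by (simp add: x'_def algebra_simps)
        also have "\<dots> = (\<Sum>a<n. \<Sum>b<n. s a b * x' a b) + (\<Sum>a<n. x a a0 * (\<Sum>b<n. s a b * x b a0)) / d"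
          by (simp add: sum.distrib sum_divide_distrib sum_distrib_left)
        finally show ?thesis by (simp add: qf_def)
      qed
      have sub: "{a. a<n \<and> x' a a \<noteq> 0} \<subseteq> {a. a<n \<and> x a a \<noteq> 0} - {a0}"
      proof
        fix a assume "a \<in> {a. a<n \<and> x' a a \<noteq> 0}"
        hence a: "a < n" "x' a a \<noteq> 0" by auto
        have "a \<noteq> a0"
        proof
          assume "a = a0"
          hence "x' a a = d - d * d / d" by (simp add: x'_def d_def)
          thus False using a(2) dpos by simp
        qed
        moreover have "x a a \<noteq> 0"
        proof
          assume "x a a = 0"
          hence "x a a0 = 0" using psd_zero[OF px sym a(1) a0(1)] by simp
          thus False using a(2) \<open>x a a = 0\<close> by (simp add: x'_def)
        qed
        ultimately show "a \<in> {a. a<n \<and> x a a \<noteq> 0} - {a0}" using a by auto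
      qed
      have "card {a. a<n \<and> x' a a \<noteq> 0} \<le> card ({a. a<n \<and> x a a \<noteq> 0} - {a0})"
        by (rule card_mono[OF _ sub]) auto
      also have "\<dots> < card {a. a<n \<and> x a a \<noteq> 0}"
        by (rule card_Diff1_less) (use a0 in auto)
      finally have card: "card {a. a<n \<and> x' a a \<noteq> 0} < c" using cc by simp
      have "(\<Sum>a<n. \<Sum>b<n. s a b * x' a b) \<ge> 0"
        using less.IH[OF card] sym' px' by blast
      moreover have "qf n s (\<lambda>a. x a a0) / d \<ge> 0" using S dpos by simp
      ultimately show ?thesis using tr by linarith
    qed
  qed
qed

lemma psd_trace:
  fixes s x :: "nat \<Rightarrow> nat \<Rightarrow> real"
  assumes "\<forall>f. qf n s f \<ge> 0" "\<forall>a<n. \<forall>b<n. x a b = x b a" "\<forall>f. qf n x f \<ge> 0"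
  shows "(\<Sum>a<n. \<Sum>b<n. s a b * x a b) \<ge> 0"
  using psd_trace_aux[OF assms(1)] assms(2,3) by blast



lemma Sh:
  fixes s y :: "nat \<Rightarrow> nat \<Rightarrow> real"
  assumes SY: "\<forall>a<n. \<forall>j<p. (\<Sum>b<n. s a b * y b j) = 0" and a: "a < n"
  shows "(\<Sum>b<n. s a b * (\<Sum>j<p. y b j * w j)) = 0"
proof -
  have "(\<Sum>b<n. s a b * (\<Sum>j<p. y b j * w j)) = (\<Sum>b<n. \<Sum>j<p. s a b * y b j * w j)"
    by (simp add: sum_distrib_left mult.assoc)
  also have "\<dots> = (\<Sum>j<p. \<Sum>b<n. s a b * y b j * w j)" by (rule sum.swap)
  also have "\<dots> = (\<Sum>j<p. (\<Sum>b<n. s a b * y b j) * w j)" by (simp add: sum_distrib_right)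
  also have "\<dots> = 0" using SY a by simp
  finally show ?thesis .
qed

lemma bf_sym:
  fixes s :: "nat \<Rightarrow> nat \<Rightarrow> real"
  assumes sym: "\<forall>a<n. \<forall>b<n. s a b = s b a"
  shows "bf n s f g = bf n s g f"
proof -
  have "bf n s f g = (\<Sum>a<n. \<Sum>b<n. f a * (s a b * g b))" by (simp add: bf_def sum_distrib_left)
  also have "\<dots> = (\<Sum>b<n. \<Sum>a<n. f a * (s a b * g b))" by (rule sum.swap)
  also have "\<dots> = (\<Sum>b<n. g b * (\<Sum>a<n. s b a * f a))"
    unfolding sum_distrib_left using sym by (intro sum.cong refl) (simp add: algebra_simps)
  finally show ?thesis by (simp add: bf_def)
qed

lemma key:
  fixes s y :: "nat \<Rightarrow> nat \<Rightarrow> real" and ing :: "nat \<Rightarrow> nat \<Rightarrow> bool"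
  assumes sym: "\<forall>a<n. \<forall>b<n. s a b = s b a"
    and SY: "\<forall>a<n. \<forall>j<p. (\<Sum>b<n. s a b * y b j) = 0"
    and SOC: "\<forall>W. (\<forall>i<k+1. (\<Sum>j<p. \<Sum>a<n. if ing i a then y a j * W a j else 0) = 0) \<longrightarrow>
               0 \<le> (\<Sum>j<p. \<Sum>a<n. W a j * (\<Sum>b<n. s a b * W b j))"
    and lst: "lst < n" "\<forall>a<n. ing k a \<longleftrightarrow> a = lst"
    and ynorm: "(\<Sum>j<p. (y lst j)^2) = 1"
    and p: "p \<ge> 2" "p \<ge> k"
  shows "\<forall>g. qf n s g \<ge> 0"
proof (rule ccontr)
  assume "\<not> ?thesis"
  then obtain g where g: "qf n s g < 0" by (auto simp: not_le)
  define h where "h = (\<lambda>a. \<Sum>j<p. y a j * y lst j)"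
  define f where "f = (\<lambda>a. (- g lst) * h a + g a)"
  have Sh0: "\<And>a. a < n \<Longrightarrow> (\<Sum>b<n. s a b * h b) = 0"
    unfolding h_def using Sh[OF SY] by blast
  have "qf n s h = 0" using Sh0 by (simp add: qf_def)
  moreover have "bf n s g h = 0" using Sh0 by (simp add: bf_def)
  moreover have "bf n s h g = 0" using bf_sym[OF sym] \<open>bf n s g h = 0\<close> by metis
  ultimately have qff: "qf n s f < 0" using g qf_expand[of n s "- g lst" h g] unfolding f_def by simp
  have "h lst = 1" using ynorm by (simp add: h_def power2_eq_square)
  hence flst: "f lst = 0" by (simp add: f_def)
  define ca where "ca = (\<lambda>i j. \<Sum>a<n. if ing i a then y a j * f a else 0)"
  define be where "be = (\<lambda>i (M::nat \<Rightarrow> nat \<Rightarrow> real). \<Sum>j<p. \<Sum>a<n. if ing i a then y a j * (\<Sum>l<p. y a l * M l j) else 0)"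
  define WW where "WW = (\<lambda>(z::nat\<Rightarrow>real) (lam::real) (M::nat\<Rightarrow>nat\<Rightarrow>real) (a::nat) (j::nat). f a * z j + lam * (\<Sum>l<p. y a l * M l j))"
  have cons: "(\<Sum>j<p. \<Sum>a<n. if ing i a then y a j * WW z lam M a j else 0) = (\<Sum>j<p. z j * ca i j) + lam * be i M"
    for i z lam M
  proof -
    have "(\<Sum>j<p. \<Sum>a<n. if ing i a then y a j * WW z lam M a j else 0)
       = (\<Sum>j<p. \<Sum>a<n. z j * (if ing i a then y a j * f a else 0) + lam * (if ing i a then y a j * (\<Sum>l<p. y a l * M l j) else 0))"
      by (intro sum.cong refl) (simp add: WW_def algebra_simps)
    also have "\<dots> = (\<Sum>j<p. z j * ca i j) + lam * be i M"
      by (simp add: sum.distrib sum_distrib_left ca_def be_def)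
    finally show ?thesis .
  qed
  have curv: "(\<Sum>j<p. \<Sum>a<n. WW z lam M a j * (\<Sum>b<n. s a b * WW z lam M b j)) = (\<Sum>j<p. (z j)^2) * qf n s f"
    for z lam M
  proof -
    have in1: "(\<Sum>b<n. s a b * WW z lam M b j) = z j * (\<Sum>b<n. s a b * f b)" if a: "a < n" for a j
    proof -
      have "(\<Sum>b<n. s a b * WW z lam M b j) = z j * (\<Sum>b<n. s a b * f b) + lam * (\<Sum>b<n. s a b * (\<Sum>l<p. y b l * M l j))"
        by (simp add: WW_def sum.distrib sum_distrib_left algebra_simps)
      also have "(\<Sum>b<n. s a b * (\<Sum>l<p. y b l * M l j)) = 0" using Sh[OF SY a, where w="\<lambda>l. M l j"] by simp
      finally show ?thesis by simp
    qed
    have in2: "(\<Sum>a<n. (\<Sum>l<p. y a l * M l j) * (\<Sum>b<n. s a b * f b)) = 0" for j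
    proof -
      have "(\<Sum>a<n. (\<Sum>l<p. y a l * M l j) * (\<Sum>b<n. s a b * f b)) = bf n s (\<lambda>a. \<Sum>l<p. y a l * M l j) f"
        by (simp add: bf_def)
      also have "\<dots> = bf n s f (\<lambda>a. \<Sum>l<p. y a l * M l j)" by (rule bf_sym[OF sym])
      also have "\<dots> = 0" unfolding bf_def using Sh[OF SY] by simp
      finally show ?thesis .
    qed
    have "(\<Sum>j<p. \<Sum>a<n. WW z lam M a j * (\<Sum>b<n. s a b * WW z lam M b j))
        = (\<Sum>j<p. \<Sum>a<n. WW z lam M a j * (z j * (\<Sum>b<n. s a b * f b)))"
      using in1 by (intro sum.cong refl) simp
    also have "\<dots> = (\<Sum>j<p. (z j)^2 * qf n s f + lam * z j * (\<Sum>a<n. (\<Sum>l<p. y a l * M l j) * (\<Sum>b<n. s a b * f b)))"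
    proof (intro sum.cong refl)
      fix j
      define Sf where "Sf = (\<lambda>a. \<Sum>b<n. s a b * f b)"
      define hM where "hM = (\<lambda>a. \<Sum>l<p. y a l * M l j)"
      have "(\<Sum>a<n. WW z lam M a j * (z j * Sf a)) = (\<Sum>a<n. (z j)^2 * (f a * Sf a) + lam * z j * (hM a * Sf a))"
        by (intro sum.cong refl) (simp add: WW_def hM_def power2_eq_square algebra_simps)
      also have "\<dots> = (z j)^2 * (\<Sum>a<n. f a * Sf a) + lam * z j * (\<Sum>a<n. hM a * Sf a)"
        by (simp add: sum.distrib sum_distrib_left)
      finally show "(\<Sum>a<n. WW z lam M a j * (z j * (\<Sum>b<n. s a b * f b))) =
         (z j)^2 * qf n s f + lam * z j * (\<Sum>a<n. (\<Sum>l<p. y a l * M l j) * (\<Sum>b<n. s a b * f b))"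
        by (simp add: Sf_def hM_def qf_def)
    qed
    also have "\<dots> = (\<Sum>j<p. (z j)^2) * qf n s f" using in2 by (simp add: sum_distrib_right)
    finally show ?thesis .
  qed
  have calast: "ca k j = 0" for j
  proof -
    have "ca k j = (\<Sum>a<n. if a = lst then y a j * f a else 0)"
      unfolding ca_def using lst(2) by (intro sum.cong refl) auto
    also have "\<dots> = 0" using lst(1) flst by simp
    finally show ?thesis .
  qed
  have bad: False if cz: "\<forall>i<k+1. (\<Sum>j<p. z j * ca i j) + lam * be i M = 0" and zj: "j0 < p" "z j0 \<noteq> 0"
    for z lam M j0
  proof -
    have "(\<Sum>j<p. (z j)^2) > 0"
    proof -
      have "(z j0)^2 \<le> (\<Sum>j<p. (z j)^2)"
        using zj(1) by (intro member_le_sum) auto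
      moreover have "(z j0)^2 > 0" using zj(2) by simp
      ultimately show ?thesis by linarith
    qed
    hence neg: "(\<Sum>j<p. (z j)^2) * qf n s f < 0" using qff by (simp add: mult_pos_neg)
    have "0 \<le> (\<Sum>j<p. \<Sum>a<n. WW z lam M a j * (\<Sum>b<n. s a b * WW z lam M b j))"
      using SOC[rule_format, of "WW z lam M"] cons cz by simp
    thus False using curv neg by simp
  qed
  show False
  proof (cases "\<exists>M i0. i0 < k \<and> be k M = 0 \<and> be i0 M \<noteq> 0")
    case True
    then obtain M i0 where M: "i0 < k" "be k M = 0" "be i0 M \<noteq> 0" by blast
    obtain x where x: "\<exists>j<p+1. x j \<noteq> 0"
      "\<forall>i<k. (\<Sum>j<p+1. (if j < p then ca i j else be i M) * x j) = 0"
      using lin_sys[of k "p+1" "\<lambda>i j. if j < p then ca i j else be i M"] p by auto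
    have sx: "\<forall>i<k. (\<Sum>j<p. x j * ca i j) + x p * be i M = 0"
    proof (intro allI impI)
      fix i assume "i < k"
      hence "(\<Sum>j<p+1. (if j < p then ca i j else be i M) * x j) = 0" using x(2) by blast
      moreover have "(\<Sum>j<p+1. (if j < p then ca i j else be i M) * x j) = (\<Sum>j<p. x j * ca i j) + x p * be i M"
        by (simp add: mult.commute)
      ultimately show "(\<Sum>j<p. x j * ca i j) + x p * be i M = 0" by simp
    qed
    have cz: "\<forall>i<k+1. (\<Sum>j<p. x j * ca i j) + x p * be i M = 0"
    proof (intro allI impI)
      fix i assume "i < k + 1"
      then consider "i < k" | "i = k" by linarith
      thus "(\<Sum>j<p. x j * ca i j) + x p * be i M = 0"
        using sx calast M(2) by cases auto
    qed
    have "\<exists>j<p. x j \<noteq> 0"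
    proof (rule ccontr)
      assume nz: "\<not> (\<exists>j<p. x j \<noteq> 0)"
      hence "x p * be i0 M = 0" using sx M(1) by simp
      hence "x p = 0" using M(3) by simp
      thus False using nz x(1) less_Suc_eq by auto
    qed
    then obtain j0 where "j0 < p" "x j0 \<noteq> 0" by blast
    thus False using bad[OF cz] by blast
  next
    case False
    hence Bh: "\<forall>M. be k M = 0 \<longrightarrow> (\<forall>i<k. be i M = 0)" by blast
    obtain z where z: "\<exists>j<p. z j \<noteq> 0" "\<forall>i<(1::nat). (\<Sum>j<p. y lst j * z j) = 0"
      using lin_sys[of 1 p "\<lambda>i j. y lst j"] p by auto
    define Yz where "Yz = (\<lambda>a. \<Sum>j<p. y a j * z j)"
    have Yzl: "Yz lst = 0" using z(2)[rule_format, of 0] by (simp add: Yz_def)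
    define M where "M = (\<lambda>l j. z l * z j)"
    have beM: "be i M = (\<Sum>a<n. if ing i a then (Yz a)^2 else 0)" for i
    proof -
      have "be i M = (\<Sum>j<p. \<Sum>a<n. if ing i a then y a j * z j * Yz a else 0)"
        unfolding be_def M_def Yz_def
        by (intro sum.cong refl) (simp add: sum_distrib_left sum_distrib_right algebra_simps)
      also have "\<dots> = (\<Sum>a<n. \<Sum>j<p. if ing i a then y a j * z j * Yz a else 0)" by (rule sum.swap)
      also have "\<dots> = (\<Sum>a<n. if ing i a then (Yz a)^2 else 0)"
        by (intro sum.cong refl) (simp add: Yz_def sum_distrib_right power2_eq_square)
      finally show ?thesis .
    qed
    have "be k M = 0"
    proof -
      have "be k M = (\<Sum>a<n. if a = lst then (Yz a)^2 else 0)"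
        unfolding beM using lst(2) by (intro sum.cong refl) auto
      thus ?thesis using lst(1) Yzl by simp
    qed
    hence beall: "\<forall>i<k. be i M = 0" using Bh by blast
    have Yz0: "\<forall>i<k+1. \<forall>a<n. ing i a \<longrightarrow> Yz a = 0"
    proof (intro allI impI)
      fix i a assume i: "i < k + 1" and a: "a < n" and ia: "ing i a"
      show "Yz a = 0"
      proof (cases "i = k")
        case True thus ?thesis using lst(2) a ia Yzl by auto
      next
        case False
        hence "(\<Sum>a<n. if ing i a then (Yz a)^2 else 0) = 0" using beall beM i by simp
        hence "\<forall>a\<in>{..<n}. (if ing i a then (Yz a)^2 else 0) = 0"
          by (subst sum_nonneg_eq_0_iff[symmetric]) auto
        hence "(if ing i a then (Yz a)^2 else 0) = 0" using a by blast
        thus ?thesis using ia by simp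
      qed
    qed
    have cz: "\<forall>i<k+1. (\<Sum>j<p. z j * ca i j) + 0 * be i M = 0"
    proof (intro allI impI)
      fix i assume i: "i < k + 1"
      have "(\<Sum>j<p. z j * ca i j) = (\<Sum>j<p. \<Sum>a<n. if ing i a then f a * (y a j * z j) else 0)"
        unfolding ca_def sum_distrib_left by (intro sum.cong refl) (simp add: algebra_simps)
      also have "\<dots> = (\<Sum>a<n. \<Sum>j<p. if ing i a then f a * (y a j * z j) else 0)" by (rule sum.swap)
      also have "\<dots> = (\<Sum>a<n. if ing i a then f a * Yz a else 0)"
        by (intro sum.cong refl) (simp add: Yz_def sum_distrib_left)
      also have "\<dots> = 0" using Yz0 i by (intro sum.neutral) auto
      finally show "(\<Sum>j<p. z j * ca i j) + 0 * be i M = 0" by simp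
    qed
    obtain j0 where "j0 < p" "z j0 \<noteq> 0" using z(1) by blast
    thus False using bad[OF cz] by blast
  qed
qed



definition ing :: "nat list \<Rightarrow> nat \<Rightarrow> nat \<Rightarrow> bool" where
  "ing ns i a = (if i < length ns then goff ns i \<le> a \<and> a < goff ns i + ns ! i else a = sum_list ns)"

lemma Acon_idx: "a < sum_list ns + 1 \<Longrightarrow> b < sum_list ns + 1 \<Longrightarrow>
   Acon ns i $$ (a,b) = (if a = b \<and> ing ns i a then 1 else 0)"
  by (simp add: Acon_def ing_def)

lemma Acon_carrier: "Acon ns i \<in> carrier_mat (sum_list ns + 1) (sum_list ns + 1)"
  by (simp add: Acon_def)

lemma frob_sum: "A \<in> carrier_mat m n \<Longrightarrow> B \<in> carrier_mat m n \<Longrightarrow>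
   frob_inner A B = (\<Sum>j<n. \<Sum>a<m. A$$(a,j) * B$$(a,j))"
  unfolding frob_inner_def mtrace_def
  by (auto simp: scalar_prod_def lessThan_atLeast0 intro!: sum.cong)

lemma mult_idx: "A \<in> carrier_mat m l \<Longrightarrow> B \<in> carrier_mat l n \<Longrightarrow> a < m \<Longrightarrow> j < n \<Longrightarrow>
   (A * B) $$ (a,j) = (\<Sum>b<l. A$$(a,b) * B$$(b,j))"
  by (simp add: scalar_prod_def lessThan_atLeast0)

lemma sum_shift: "(\<Sum>a\<in>{g..<g+n}. F a) = (\<Sum>a<n. F (g + a :: nat))"
proof -
  have "(\<Sum>a\<in>{0+g..<n+g}. F a) = (\<Sum>a\<in>{0..<n}. F (a + g))" by (rule sum.shift_bounds_nat_ivl)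
  thus ?thesis by (simp add: add.commute lessThan_atLeast0)
qed

lemma goff_le: "i < length ns \<Longrightarrow> goff ns i + ns ! i \<le> sum_list ns"
proof -
  assume i: "i < length ns"
  have "goff ns i + ns ! i = sum_list (take (Suc i) ns)"
    using i by (simp add: goff_def take_Suc_conv_app_nth)
  also have "\<dots> \<le> sum_list ns"
    by (metis append_take_drop_id sum_list_append le_add1)
  finally show ?thesis .
qed

lemma Acon_Y:
  assumes Y: "Y \<in> carrier_mat (sum_list ns + 1) p" and W: "W \<in> carrier_mat (sum_list ns + 1) p"
  shows "frob_inner (Acon ns i * Y) W =
    (\<Sum>j<p. \<Sum>a<sum_list ns + 1. if ing ns i a then Y$$(a,j) * W$$(a,j) else 0)"
proof -
  have AY: "Acon ns i * Y \<in> carrier_mat (sum_list ns + 1) p" using mult_carrier_mat[OF Acon_carrier Y] .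
  have e: "(Acon ns i * Y) $$ (a,j) = (if ing ns i a then Y$$(a,j) else 0)"
    if a: "a < sum_list ns + 1" and j: "j < p" for a j
  proof -
    have "(Acon ns i * Y) $$ (a,j) = (\<Sum>b<sum_list ns + 1. Acon ns i $$ (a,b) * Y$$(b,j))"
      using mult_idx[OF Acon_carrier Y a j] .
    also have "\<dots> = (\<Sum>b<sum_list ns + 1. if b = a then (if ing ns i a then Y$$(a,j) else 0) else 0)"
      using a by (intro sum.cong refl) (auto simp: Acon_idx)
    also have "\<dots> = (if ing ns i a then Y$$(a,j) else 0)" using a by simp
    finally show ?thesis .
  qed
  show ?thesis unfolding frob_sum[OF AY W]
    by (intro sum.cong refl) (simp add: e)
qed

lemma dg_Acon:
  assumes X: "X \<in> carrier_mat (sum_list ns + 1) (sum_list ns + 1)"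
  shows "frob_inner (Acon ns i) X = (\<Sum>a<sum_list ns + 1. if ing ns i a then X$$(a,a) else 0)"
proof -
  have "frob_inner (Acon ns i) X = (\<Sum>j<sum_list ns + 1. \<Sum>a<sum_list ns + 1. Acon ns i $$ (a,j) * X$$(a,j))"
    by (rule frob_sum[OF Acon_carrier X])
  also have "\<dots> = (\<Sum>j<sum_list ns + 1. \<Sum>a<sum_list ns + 1. if a = j then (if ing ns i j then X$$(j,j) else 0) else 0)"
    by (intro sum.cong refl) (auto simp: Acon_idx)
  also have "\<dots> = (\<Sum>a<sum_list ns + 1. if ing ns i a then X$$(a,a) else 0)" by simp
  finally show ?thesis .
qed

lemma dg_blk:
  assumes i: "i < length ns"
  shows "(\<Sum>a<sum_list ns + 1. if ing ns i a then X$$(a,a) else 0) = mtrace (dblk ns i X)"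
proof -
  have "(\<Sum>a<sum_list ns + 1. if ing ns i a then X$$(a,a) else 0) = (\<Sum>a\<in>{a\<in>{..<sum_list ns + 1}. ing ns i a}. X$$(a,a))"
    by (rule sum.inter_filter[symmetric]) simp
  also have "{a\<in>{..<sum_list ns + 1}. ing ns i a} = {goff ns i..<goff ns i + ns ! i}"
    using goff_le[OF i] i by (auto simp: ing_def)
  also have "(\<Sum>a\<in>{goff ns i..<goff ns i + ns ! i}. X$$(a,a)) = (\<Sum>a<ns ! i. X$$(goff ns i + a, goff ns i + a))"
    by (rule sum_shift)
  also have "\<dots> = mtrace (dblk ns i X)"
    by (simp add: mtrace_def dblk_def)
  finally show ?thesis .
qed


lemma qf_cong: "(\<And>a. a < n \<Longrightarrow> f a = g a) \<Longrightarrow> qf n s f = qf n s g"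
  by (simp add: qf_def)

lemma qf_cong2: "(\<And>a b. a < n \<Longrightarrow> b < n \<Longrightarrow> s a b = t a b) \<Longrightarrow> qf n s f = qf n t f"
  by (simp add: qf_def)

lemma psd_qf: "X \<in> carrier_mat m m \<Longrightarrow> v \<in> carrier_vec m \<Longrightarrow>
   v \<bullet> (X *\<^sub>v v) = qf m (\<lambda>a b. X$$(a,b)) (\<lambda>a. v$a)"
  by (simp add: scalar_prod_def qf_def lessThan_atLeast0)

lemma psd_fun:
  assumes "psd X" "X \<in> carrier_mat m m"
  shows "\<forall>f. qf m (\<lambda>a b. X$$(a,b)) f \<ge> 0"
proof
  fix f
  have "vec m f \<bullet> (X *\<^sub>v vec m f) \<ge> 0" using assms by (simp add: psd_def)
  also have "vec m f \<bullet> (X *\<^sub>v vec m f) = qf m (\<lambda>a b. X$$(a,b)) f"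
  proof -
    have "vec m f \<bullet> (X *\<^sub>v vec m f) = qf m (\<lambda>a b. X$$(a,b)) (\<lambda>a. vec m f $ a)"
      using psd_qf[OF assms(2), of "vec m f"] by simp
    also have "\<dots> = qf m (\<lambda>a b. X$$(a,b)) f" by (rule qf_cong) simp
    finally show ?thesis .
  qed
  finally show "qf m (\<lambda>a b. X$$(a,b)) f \<ge> 0" .
qed

lemma gram_qf: "qf n (\<lambda>a b. \<Sum>j<p. z a j * z b j) v = (\<Sum>j<p. (\<Sum>a<n. v a * z a j)^2)"
proof -
  have e1: "qf n (\<lambda>a b. \<Sum>j<p. z a j * z b j) v = (\<Sum>a<n. \<Sum>b<n. \<Sum>j<p. v a * (z a j * z b j * v b))"
    unfolding qf_def by (simp only: sum_distrib_left sum_distrib_right)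
  have e2: "(\<Sum>a<n. \<Sum>b<n. \<Sum>j<p. v a * (z a j * z b j * v b)) = (\<Sum>a<n. \<Sum>j<p. \<Sum>b<n. v a * (z a j * z b j * v b))"
    by (rule sum.cong[OF refl], rule sum.swap)
  have e3: "(\<Sum>a<n. \<Sum>j<p. \<Sum>b<n. v a * (z a j * z b j * v b)) = (\<Sum>j<p. \<Sum>a<n. \<Sum>b<n. v a * (z a j * z b j * v b))"
    by (rule sum.swap)
  have e4: "(\<Sum>j<p. (\<Sum>a<n. v a * z a j)^2) = (\<Sum>j<p. \<Sum>a<n. \<Sum>b<n. (v a * z a j) * (v b * z b j))"
    by (simp only: power2_eq_square sum_product)
  have e5: "(\<Sum>j<p. \<Sum>a<n. \<Sum>b<n. v a * (z a j * z b j * v b)) = (\<Sum>j<p. \<Sum>a<n. \<Sum>b<n. (v a * z a j) * (v b * z b j))"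
    by (intro sum.cong refl) (simp only: ac_simps)
  show ?thesis by (simp only: e1 e2 e3 e4 e5)
qed

lemma YYt_idx: "Y \<in> carrier_mat m p \<Longrightarrow> a < m \<Longrightarrow> b < m \<Longrightarrow>
   (Y * transpose_mat Y) $$ (a,b) = (\<Sum>j<p. Y$$(a,j) * Y$$(b,j))"
  by (simp add: scalar_prod_def lessThan_atLeast0)

lemma sqrt1: "sqrt x = 1 \<Longrightarrow> x = (1::real)" by simp

lemma bm_t:
  fixes Z :: "real mat"
  assumes Zc: "Z \<in> carrier_mat m p"
  shows "transpose_mat (Z * transpose_mat Z) = Z * transpose_mat Z"
proof (rule eq_matI)
  fix i j assume "i < dim_row (Z * transpose_mat Z)" "j < dim_col (Z * transpose_mat Z)"
  hence ij: "i < m" "j < m" using Zc by auto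
  show "transpose_mat (Z * transpose_mat Z) $$ (i, j) = (Z * transpose_mat Z) $$ (i, j)"
    using ij Zc by (simp add: comm_scalar_prod[of "row Z i" p "row Z j"])
qed (use Zc in auto)

lemma bm_d:
  assumes Z: "bm_feasible ns p Z" and i: "i < length ns"
  shows "mtrace (dblk ns i (Z * transpose_mat Z)) = 1"
proof -
  have Zc: "Z \<in> carrier_mat (sum_list ns+1) p" using Z by (simp add: bm_feasible_def)
  have "sqrt (frob_inner (blk ns i Z) (blk ns i Z)) = 1"
    using Z i by (simp add: bm_feasible_def frob_norm_def)
  hence "frob_inner (blk ns i Z) (blk ns i Z) = 1" by (rule sqrt1)
  moreover have bc: "blk ns i Z \<in> carrier_mat (ns ! i) p" using Zc by (simp add: blk_def)
  ultimately have "(\<Sum>j<p. \<Sum>a<ns ! i. blk ns i Z $$ (a,j) * blk ns i Z $$ (a,j)) = 1"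
    using frob_sum[OF bc bc] by simp
  hence "(\<Sum>j<p. \<Sum>a<ns ! i. Z $$ (goff ns i + a,j) * Z $$ (goff ns i + a,j)) = 1"
    using Zc by (simp add: blk_def)
  hence "(\<Sum>a<ns ! i. \<Sum>j<p. Z $$ (goff ns i + a,j) * Z $$ (goff ns i + a,j)) = 1"
    using sum.swap[of "\<lambda>a j. Z $$ (goff ns i + a,j) * Z $$ (goff ns i + a,j)" "{..<p}" "{..<ns ! i}"] by simp
  moreover have "mtrace (dblk ns i (Z * transpose_mat Z)) = (\<Sum>a<ns ! i. \<Sum>j<p. Z $$ (goff ns i + a,j) * Z $$ (goff ns i + a,j))"
  proof -
    have "\<And>a. a < ns ! i \<Longrightarrow> goff ns i + a < sum_list ns + 1" using goff_le[OF i] by linarith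
    thus ?thesis unfolding mtrace_def dblk_def using Zc
      by (intro sum.cong) (auto simp: scalar_prod_def lessThan_atLeast0)
  qed
  ultimately show ?thesis by simp
qed

lemma bm_l:
  assumes Z: "bm_feasible ns p Z"
  shows "(Z * transpose_mat Z) $$ (sum_list ns, sum_list ns) = 1"
proof -
  have Zc: "Z \<in> carrier_mat (sum_list ns+1) p" using Z by (simp add: bm_feasible_def)
  have "sqrt (frob_inner (lastrow ns Z) (lastrow ns Z)) = 1"
    using Z by (simp add: bm_feasible_def frob_norm_def)
  hence "frob_inner (lastrow ns Z) (lastrow ns Z) = 1" by (rule sqrt1)
  moreover have lc: "lastrow ns Z \<in> carrier_mat 1 p" using Zc by (simp add: lastrow_def)
  ultimately have "(\<Sum>j<p. \<Sum>a<1. lastrow ns Z $$ (a,j) * lastrow ns Z $$ (a,j)) = 1"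
    using frob_sum[OF lc lc] by simp
  hence "(\<Sum>j<p. Z $$ (sum_list ns,j) * Z $$ (sum_list ns,j)) = 1" using Zc by (simp add: lastrow_def)
  thus ?thesis using YYt_idx[OF Zc, of "sum_list ns" "sum_list ns"] by simp
qed

lemma bm_psd:
  assumes Zc: "Z \<in> carrier_mat m p"
  shows "psd (Z * transpose_mat Z)"
  unfolding psd_def
proof
  fix v :: "real vec" assume v: "v \<in> carrier_vec (dim_row (Z * transpose_mat Z))"
  hence v': "v \<in> carrier_vec m" using Zc by simp
  have c: "Z * transpose_mat Z \<in> carrier_mat m m" using Zc by simp
  have "v \<bullet> (Z * transpose_mat Z *\<^sub>v v) = qf m (\<lambda>a b. (Z * transpose_mat Z)$$(a,b)) (\<lambda>a. v$a)"
    by (rule psd_qf[OF c v'])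
  also have "\<dots> = qf m (\<lambda>a b. \<Sum>j<p. Z$$(a,j) * Z$$(b,j)) (\<lambda>a. v$a)"
    by (intro qf_cong2) (simp add: YYt_idx[OF Zc])
  also have "\<dots> = (\<Sum>j<p. (\<Sum>a<m. v$a * Z$$(a,j))^2)" by (rule gram_qf)
  finally have eq: "v \<bullet> (Z * transpose_mat Z *\<^sub>v v) = (\<Sum>j<p. (\<Sum>a<m. v$a * Z$$(a,j))^2)" .
  have "0 \<le> (\<Sum>j<p. (\<Sum>a<m. v$a * Z$$(a,j))^2)" by (rule sum_nonneg) (rule zero_le_power2)
  thus "0 \<le> v \<bullet> (Z * transpose_mat Z *\<^sub>v v)" unfolding eq .
qed

lemma bm_to_sdp:
  assumes Z: "bm_feasible ns p Z"
  shows "sdp_feasible ns (Z * transpose_mat Z)"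
proof -
  have Zc: "Z \<in> carrier_mat (sum_list ns+1) p" using Z by (simp add: bm_feasible_def)
  have c: "Z * transpose_mat Z \<in> carrier_mat (sum_list ns+1) (sum_list ns+1)" using Zc by simp
  show ?thesis unfolding sdp_feasible_def
    using c bm_t[OF Zc] bm_d[OF Z] bm_l[OF Z] bm_psd[OF Zc] by blast
qed



lemma cost_fun:
  fixes c z :: "nat \<Rightarrow> nat \<Rightarrow> real"
  shows "(\<Sum>j<p. \<Sum>a<n. (\<Sum>b<n. c a b * z b j) * z a j) = (\<Sum>b<n. \<Sum>a<n. c a b * (\<Sum>j<p. z a j * z b j))"
proof -
  have e1: "(\<Sum>j<p. \<Sum>a<n. (\<Sum>b<n. c a b * z b j) * z a j) = (\<Sum>j<p. \<Sum>a<n. \<Sum>b<n. c a b * z b j * z a j)"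
    by (simp only: sum_distrib_right)
  have e2: "(\<Sum>b<n. \<Sum>a<n. c a b * (\<Sum>j<p. z a j * z b j)) = (\<Sum>b<n. \<Sum>a<n. \<Sum>j<p. c a b * (z a j * z b j))"
    by (simp only: sum_distrib_left)
  have e3: "(\<Sum>b<n. \<Sum>a<n. \<Sum>j<p. c a b * (z a j * z b j)) = (\<Sum>b<n. \<Sum>j<p. \<Sum>a<n. c a b * (z a j * z b j))"
    by (rule sum.cong[OF refl], rule sum.swap)
  have e4: "(\<Sum>b<n. \<Sum>j<p. \<Sum>a<n. c a b * (z a j * z b j)) = (\<Sum>j<p. \<Sum>b<n. \<Sum>a<n. c a b * (z a j * z b j))"
    by (rule sum.swap)
  have e5: "(\<Sum>j<p. \<Sum>b<n. \<Sum>a<n. c a b * (z a j * z b j)) = (\<Sum>j<p. \<Sum>a<n. \<Sum>b<n. c a b * (z a j * z b j))"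
    by (rule sum.cong[OF refl], rule sum.swap)
  have e6: "(\<Sum>j<p. \<Sum>a<n. \<Sum>b<n. c a b * z b j * z a j) = (\<Sum>j<p. \<Sum>a<n. \<Sum>b<n. c a b * (z a j * z b j))"
    by (intro sum.cong refl) (simp only: ac_simps)
  show ?thesis by (simp only: e1 e2 e3 e4 e5 e6)
qed

lemma cost_eq:
  assumes C: "C \<in> carrier_mat m m" and Z: "Z \<in> carrier_mat m p"
  shows "bm_cost C Z = sdp_cost C (Z * transpose_mat Z)"
proof -
  have CZ: "C * Z \<in> carrier_mat m p" using C Z by simp
  have ZZ: "Z * transpose_mat Z \<in> carrier_mat m m" using Z by simp
  have "bm_cost C Z = (\<Sum>j<p. \<Sum>a<m. (\<Sum>b<m. C$$(a,b) * Z$$(b,j)) * Z$$(a,j))"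
    unfolding bm_cost_def frob_sum[OF CZ Z] using mult_idx[OF C Z] by simp
  also have "\<dots> = (\<Sum>b<m. \<Sum>a<m. C$$(a,b) * (\<Sum>j<p. Z$$(a,j) * Z$$(b,j)))"
    by (rule cost_fun)
  also have "\<dots> = sdp_cost C (Z * transpose_mat Z)"
    unfolding sdp_cost_def frob_sum[OF C ZZ] using YYt_idx[OF Z] by simp
  finally show ?thesis .
qed

lemma dual:
  fixes ns :: "nat list" and S C X :: "real mat" and \<nu> :: "real vec"
  assumes C: "C \<in> carrier_mat (sum_list ns + 1) (sum_list ns + 1)"
    and X: "X \<in> carrier_mat (sum_list ns + 1) (sum_list ns + 1)"
    and S: "\<And>a b. a < sum_list ns + 1 \<Longrightarrow> b < sum_list ns + 1 \<Longrightarrow>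
         C$$(a,b) = S$$(a,b) + (\<Sum>i<length ns + 1. \<nu>$i * Acon ns i $$ (a,b))"
    and A1: "\<forall>i<length ns + 1. frob_inner (Acon ns i) X = 1"
  shows "sdp_cost C X = (\<Sum>b<sum_list ns + 1. \<Sum>a<sum_list ns + 1. S$$(a,b) * X$$(a,b)) + (\<Sum>i<length ns + 1. \<nu>$i)"
proof -
  let ?n = "sum_list ns + 1" and ?k = "length ns + 1"
  have "sdp_cost C X = (\<Sum>b<?n. \<Sum>a<?n. C$$(a,b) * X$$(a,b))"
    unfolding sdp_cost_def by (rule frob_sum[OF C X])
  also have "\<dots> = (\<Sum>b<?n. \<Sum>a<?n. S$$(a,b) * X$$(a,b) + (\<Sum>i<?k. \<nu>$i * (Acon ns i $$ (a,b) * X$$(a,b))))"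
  proof (intro sum.cong refl)
    fix a b assume "a \<in> {..<?n}" "b \<in> {..<?n}"
    hence "C$$(a,b) = S$$(a,b) + (\<Sum>i<?k. \<nu>$i * Acon ns i $$ (a,b))" using S by simp
    hence "C$$(a,b) * X$$(a,b) = S$$(a,b) * X$$(a,b) + (\<Sum>i<?k. \<nu>$i * Acon ns i $$ (a,b)) * X$$(a,b)"
      by (simp add: distrib_right)
    also have "(\<Sum>i<?k. \<nu>$i * Acon ns i $$ (a,b)) * X$$(a,b) = (\<Sum>i<?k. \<nu>$i * (Acon ns i $$ (a,b) * X$$(a,b)))"
      by (simp only: sum_distrib_right mult.assoc)
    finally show "C$$(a,b) * X$$(a,b) = S$$(a,b) * X$$(a,b) + (\<Sum>i<?k. \<nu>$i * (Acon ns i $$ (a,b) * X$$(a,b)))" .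
  qed
  also have "\<dots> = (\<Sum>b<?n. \<Sum>a<?n. S$$(a,b) * X$$(a,b)) + (\<Sum>b<?n. \<Sum>a<?n. \<Sum>i<?k. \<nu>$i * (Acon ns i $$ (a,b) * X$$(a,b)))"
    by (simp only: sum.distrib)
  also have "(\<Sum>b<?n. \<Sum>a<?n. \<Sum>i<?k. \<nu>$i * (Acon ns i $$ (a,b) * X$$(a,b)))
      = (\<Sum>b<?n. \<Sum>i<?k. \<Sum>a<?n. \<nu>$i * (Acon ns i $$ (a,b) * X$$(a,b)))"
    by (rule sum.cong[OF refl], rule sum.swap)
  also have "\<dots> = (\<Sum>i<?k. \<Sum>b<?n. \<Sum>a<?n. \<nu>$i * (Acon ns i $$ (a,b) * X$$(a,b)))"
    by (rule sum.swap)
  also have "\<dots> = (\<Sum>i<?k. \<nu>$i * frob_inner (Acon ns i) X)"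
    unfolding frob_sum[OF Acon_carrier X] by (simp only: sum_distrib_left)
  also have "\<dots> = (\<Sum>i<?k. \<nu>$i)" using A1 by simp
  finally show ?thesis .
qed

lemma sdp_A1:
  assumes "sdp_feasible ns X"
  shows "\<forall>i<length ns + 1. frob_inner (Acon ns i) X = 1"
proof (intro allI impI)
  fix i assume i: "i < length ns + 1"
  have X: "X \<in> carrier_mat (sum_list ns + 1) (sum_list ns + 1)" using assms by (simp add: sdp_feasible_def)
  show "frob_inner (Acon ns i) X = 1"
  proof (cases "i < length ns")
    case True
    thus ?thesis using dg_Acon[OF X] dg_blk[OF True] assms by (simp add: sdp_feasible_def)
  next
    case False
    hence "i = length ns" using i by simp
    hence "frob_inner (Acon ns i) X = (\<Sum>a<sum_list ns + 1. if a = sum_list ns then X$$(a,a) else 0)"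
      using dg_Acon[OF X] by (simp add: ing_def)
    also have "\<dots> = X$$(sum_list ns, sum_list ns)" by simp
    finally show ?thesis using assms by (simp add: sdp_feasible_def)
  qed
qed

theorem corollary7:
  fixes ns :: "nat list" and p :: nat and C :: "real mat" and Y :: "real mat"
  assumes "length ns \<ge> 1"
    and "\<forall>i<length ns. ns ! i \<ge> 2"
    and "C \<in> carrier_mat (sum_list ns + 1) (sum_list ns + 1)"
    and "transpose_mat C = C"
    and "p \<ge> max 2 (length ns)"
    and "second_order_critical ns p C Y"
  shows "(\<forall>Z. bm_feasible ns p Z \<longrightarrow> bm_cost C Y \<le> bm_cost C Z)
    \<and> sdp_feasible ns (Y * transpose_mat Y)
    \<and> (\<forall>X. sdp_feasible ns X \<longrightarrow> sdp_cost C (Y * transpose_mat Y) \<le> sdp_cost C X)"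
proof -
  let ?N = "sum_list ns" and ?k = "length ns"
  note Cc = assms(3)
  have bmY: "bm_feasible ns p Y" using assms(6) by (simp add: second_order_critical_def)
  have Yc: "Y \<in> carrier_mat (?N+1) p" using bmY by (simp add: bm_feasible_def)
  define S where "S = Smat ns C Y"
  define \<nu> where "\<nu> = mult ns C Y"
  have Sdef: "S = C - Aadj ns \<nu>" by (simp add: S_def \<nu>_def Smat_def)
  have Aadjc: "Aadj ns \<nu> \<in> carrier_mat (?N+1) (?N+1)" by (simp add: Aadj_def)
  have Sc: "S \<in> carrier_mat (?N+1) (?N+1)" unfolding Sdef by (rule minus_carrier_mat[OF Aadjc])
  have S_idx: "S$$(a,b) = C$$(a,b) - (\<Sum>i<?k+1. \<nu>$i * Acon ns i $$ (a,b))"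
    if "a < ?N+1" "b < ?N+1" for a b
    using that Sdef Cc Aadjc by (simp add: Aadj_def)
  have C_S: "C$$(a,b) = S$$(a,b) + (\<Sum>i<?k+1. \<nu>$i * Acon ns i $$ (a,b))"
    if "a < ?N+1" "b < ?N+1" for a b
    using S_idx[OF that] by simp
  have Csym: "C$$(a,b) = C$$(b,a)" if "a < ?N+1" "b < ?N+1" for a b
  proof -
    have "C$$(a,b) = transpose_mat C $$ (a,b)" using assms(4) by simp
    also have "\<dots> = C$$(b,a)" using that Cc by simp
    finally show ?thesis .
  qed
  have Ssym: "\<forall>a<?N+1. \<forall>b<?N+1. S$$(a,b) = S$$(b,a)"
  proof (intro allI impI)
    fix a b assume ab: "a < ?N+1" "b < ?N+1"
    have "(\<Sum>i<?k+1. \<nu>$i * Acon ns i $$ (a,b)) = (\<Sum>i<?k+1. \<nu>$i * Acon ns i $$ (b,a))"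
      using ab by (intro sum.cong refl) (auto simp: Acon_idx)
    thus "S$$(a,b) = S$$(b,a)" using S_idx ab Csym by simp
  qed
  have SY0: "S * Y = 0\<^sub>m (?N+1) p" using assms(6) by (simp add: second_order_critical_def S_def)
  have SY: "\<forall>a<?N+1. \<forall>j<p. (\<Sum>b<?N+1. S$$(a,b) * Y$$(b,j)) = 0"
  proof (intro allI impI)
    fix a j assume aj: "a < ?N+1" "j < p"
    have "(S * Y) $$ (a,j) = 0" using SY0 aj by simp
    thus "(\<Sum>b<?N+1. S$$(a,b) * Y$$(b,j)) = 0" using mult_idx[OF Sc Yc aj] by simp
  qed
  have SOCf: "\<forall>W. (\<forall>i<?k+1. (\<Sum>j<p. \<Sum>a<?N+1. if ing ns i a then Y$$(a,j) * W a j else 0) = 0) \<longrightarrow>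
       0 \<le> (\<Sum>j<p. \<Sum>a<?N+1. W a j * (\<Sum>b<?N+1. S$$(a,b) * W b j))"
  proof (intro allI impI)
    fix W :: "nat \<Rightarrow> nat \<Rightarrow> real"
    assume cons: "\<forall>i<?k+1. (\<Sum>j<p. \<Sum>a<?N+1. if ing ns i a then Y$$(a,j) * W a j else 0) = 0"
    define Wm where "Wm = mat (?N+1) p (\<lambda>(a,j). W a j)"
    have Wc: "Wm \<in> carrier_mat (?N+1) p" by (simp add: Wm_def)
    have "Wm \<in> tangent ns Y"
      unfolding tangent_def
    proof (intro CollectI conjI allI impI)
      show "Wm \<in> carrier_mat (?N+1) (dim_col Y)" using Wc Yc by simp
      fix i assume i: "i < ?k+1"
      have "frob_inner (Acon ns i * Y) Wm = (\<Sum>j<p. \<Sum>a<?N+1. if ing ns i a then Y$$(a,j) * Wm$$(a,j) else 0)"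
        by (rule Acon_Y[OF Yc Wc])
      also have "\<dots> = (\<Sum>j<p. \<Sum>a<?N+1. if ing ns i a then Y$$(a,j) * W a j else 0)"
        by (intro sum.cong refl) (simp add: Wm_def)
      also have "\<dots> = 0" using cons i by blast
      finally show "frob_inner (Acon ns i * Y) Wm = 0" .
    qed
    hence "0 \<le> frob_inner Wm (S * Wm)" using assms(6) by (simp add: second_order_critical_def S_def)
    also have "frob_inner Wm (S * Wm) = (\<Sum>j<p. \<Sum>a<?N+1. Wm$$(a,j) * (S * Wm)$$(a,j))"
      using Sc Wc by (intro frob_sum) auto
    also have "\<dots> = (\<Sum>j<p. \<Sum>a<?N+1. W a j * (\<Sum>b<?N+1. S$$(a,b) * W b j))"
    proof (intro sum.cong refl)
      fix j a assume j: "j \<in> {..<p}" and a: "a \<in> {..<?N+1}"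
      have "(S * Wm)$$(a,j) = (\<Sum>b<?N+1. S$$(a,b) * Wm$$(b,j))"
        using j a by (intro mult_idx[OF Sc Wc]) auto
      also have "\<dots> = (\<Sum>b<?N+1. S$$(a,b) * W b j)"
        using j by (intro sum.cong refl) (simp add: Wm_def)
      finally show "Wm$$(a,j) * (S * Wm)$$(a,j) = W a j * (\<Sum>b<?N+1. S$$(a,b) * W b j)"
        using j a by (simp add: Wm_def)
    qed
    finally show "0 \<le> (\<Sum>j<p. \<Sum>a<?N+1. W a j * (\<Sum>b<?N+1. S$$(a,b) * W b j))" .
  qed
  have ynorm: "(\<Sum>j<p. (Y$$(?N,j))^2) = 1"
    using bm_l[OF bmY] YYt_idx[OF Yc, of ?N ?N] by (simp add: power2_eq_square)
  have lst: "\<forall>a<?N+1. ing ns ?k a \<longleftrightarrow> a = ?N" by (simp add: ing_def)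
  have p2: "p \<ge> 2" "p \<ge> ?k" using assms(5) by auto
  have Spsd: "\<forall>g. qf (?N+1) (\<lambda>a b. S$$(a,b)) g \<ge> 0"
    using key[where s="\<lambda>a b. S$$(a,b)" and y="\<lambda>a j. Y$$(a,j)" and ing="ing ns" and n="?N+1" and k="?k"
        and lst="?N" and p=p, OF Ssym SY SOCf _ lst ynorm p2] by simp
  have feasY: "sdp_feasible ns (Y * transpose_mat Y)" by (rule bm_to_sdp[OF bmY])
  have YYc: "Y * transpose_mat Y \<in> carrier_mat (?N+1) (?N+1)" using Yc by simp
  have costY: "sdp_cost C (Y * transpose_mat Y) = (\<Sum>i<?k+1. \<nu>$i)"
  proof -
    have "sdp_cost C (Y * transpose_mat Y) = (\<Sum>b<?N+1. \<Sum>a<?N+1. S$$(a,b) * (Y * transpose_mat Y)$$(a,b)) + (\<Sum>i<?k+1. \<nu>$i)"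
      by (rule dual[OF Cc YYc C_S sdp_A1[OF feasY]])
    also have "(\<Sum>b<?N+1. \<Sum>a<?N+1. S$$(a,b) * (Y * transpose_mat Y)$$(a,b)) = 0"
    proof (rule sum.neutral, rule ballI)
      fix b assume b: "b \<in> {..<?N+1}"
      have "(\<Sum>a<?N+1. S$$(a,b) * (Y * transpose_mat Y)$$(a,b)) = (\<Sum>a<?N+1. S$$(b,a) * (\<Sum>j<p. Y$$(a,j) * Y$$(b,j)))"
        using b Ssym by (intro sum.cong refl) (simp add: YYt_idx[OF Yc])
      also have "\<dots> = 0"
        using Sh[where s="\<lambda>a b. S$$(a,b)" and y="\<lambda>a j. Y$$(a,j)" and w="\<lambda>j. Y$$(b,j)", OF SY] b by simp
      finally show "(\<Sum>a<?N+1. S$$(a,b) * (Y * transpose_mat Y)$$(a,b)) = 0" .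
    qed
    finally show ?thesis by simp
  qed
  have sdpopt: "\<forall>X. sdp_feasible ns X \<longrightarrow> sdp_cost C (Y * transpose_mat Y) \<le> sdp_cost C X"
  proof (intro allI impI)
    fix X assume fX: "sdp_feasible ns X"
    have Xc: "X \<in> carrier_mat (?N+1) (?N+1)" using fX by (simp add: sdp_feasible_def)
    have Xsym: "\<forall>a<?N+1. \<forall>b<?N+1. X$$(a,b) = X$$(b,a)"
    proof (intro allI impI)
      fix a b assume ab: "a < ?N+1" "b < ?N+1"
      have "X$$(a,b) = transpose_mat X $$ (a,b)" using fX by (simp add: sdp_feasible_def)
      also have "\<dots> = X$$(b,a)" using ab Xc by simp
      finally show "X$$(a,b) = X$$(b,a)" .
    qed
    have Xpsd: "\<forall>f. qf (?N+1) (\<lambda>a b. X$$(a,b)) f \<ge> 0"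
      using psd_fun[OF _ Xc] fX by (simp add: sdp_feasible_def)
    have "(\<Sum>a<?N+1. \<Sum>b<?N+1. S$$(a,b) * X$$(a,b)) \<ge> 0"
      using psd_trace[where s="\<lambda>a b. S$$(a,b)" and x="\<lambda>a b. X$$(a,b)", OF Spsd Xsym Xpsd] by simp
    moreover have "(\<Sum>a<?N+1. \<Sum>b<?N+1. S$$(a,b) * X$$(a,b)) = (\<Sum>b<?N+1. \<Sum>a<?N+1. S$$(a,b) * X$$(a,b))"
      by (rule sum.swap)
    ultimately have "(\<Sum>b<?N+1. \<Sum>a<?N+1. S$$(a,b) * X$$(a,b)) \<ge> 0" by simp
    moreover have "sdp_cost C X = (\<Sum>b<?N+1. \<Sum>a<?N+1. S$$(a,b) * X$$(a,b)) + (\<Sum>i<?k+1. \<nu>$i)"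
      by (rule dual[OF Cc Xc C_S sdp_A1[OF fX]])
    ultimately show "sdp_cost C (Y * transpose_mat Y) \<le> sdp_cost C X" using costY by simp
  qed
  have bmopt: "\<forall>Z. bm_feasible ns p Z \<longrightarrow> bm_cost C Y \<le> bm_cost C Z"
  proof (intro allI impI)
    fix Z assume fZ: "bm_feasible ns p Z"
    have Zc: "Z \<in> carrier_mat (?N+1) p" using fZ by (simp add: bm_feasible_def)
    have "bm_cost C Y = sdp_cost C (Y * transpose_mat Y)" by (rule cost_eq[OF Cc Yc])
    also have "\<dots> \<le> sdp_cost C (Z * transpose_mat Z)" using sdpopt bm_to_sdp[OF fZ] by blast
    also have "\<dots> = bm_cost C Z" by (rule cost_eq[OF Cc Zc, symmetric])
    finally show "bm_cost C Y \<le> bm_cost C Z" .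
  qed
  show ?thesis using bmopt feasY sdpopt by blast
qed


end
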